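(* Let $P$ be a finite graded bowtie-free poset of rank $n$ with $\hat0,\hat1$ and a good $\mathcal{H}_n(0)$ action $U_1,\dots,U_{n-1}$, and let $S\subseteq[n-1]$. Then every chain of $P$ whose elements other than $\hat0,\hat1$ have rank set exactly $S$ extends to exactly one maximal chain of $P$ whose descent set is contained in $S$.
   Context: Bowtie-free: no distinct $a,b,c,d$ with $a$ and $b$ each covering both $c$ and $d$. A good $\mathcal{H}_n(0)$ action is a family $U_1,\dots,U_{n-1}$ of maps on the set $\mathcal{M}(P)$ of maximal chains with: (1) $U_i(\mathfrak m)$ agrees with $\mathfrak m$ except possibly at rank $i$; (2) $U_i^2=U_i$; (3) $U_iU_j=U_jU_i$ for $|i-j|\ge2$; (4) $U_iU_{i+1}U_i=U_{i+1}U_iU_{i+1}$; (5) $\omega F_P(x)=\mathrm{ch}(\chi_P)$, where $\chi_P$ is the character of the representation of the 0-Hecke algebra $\mathcal{H}_n(0)$ on $\mathbb{C}\mathcal{M}(P)$ with $T_i$ acting as $-U_i$; $F_P(x)=\sum x_1^{\mathrm{rk}(t_0,t_1)}\cdots x_k^{\mathrm{rk}(t_{k-1},t_k)}$ over multichains $\hat0=t_0\le\cdots\le t_{k-1}<t_k=\hat1$; $L_{S,n}=\sum_{1\le i_1\le\cdots\le i_n,\ i_j<i_{j+1}\ (j\in S)}x_{i_1}\cdots x_{i_n}$; $\omega(L_{S,n})=L_{[n-1]\setminus S,n}$; $\mathrm{ch}$ linear with $\mathrm{ch}(\chi_S)=L_{S,n}$ for $\chi_S$ the character of the one-dimensional representation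 $T_i\mapsto-1$ ($i\in S$), $T_i\mapsto0$ ($i\notin S$). The descent set of a maximal chain $\mathfrak m$ is $\{i\in[n-1]:U_i(\mathfrak m)\ne\mathfrak m\}$. *)

theory Defs
  imports Main
begin

definition is_chain :: "'a::order set \<Rightarrow> 'a set \<Rightarrow> bool" where
  "is_chain P C \<longleftrightarrow> C \<subseteq> P \<and> (\<forall>x\<in>C. \<forall>y\<in>C. x \<le> y \<or> y \<le> x)"

definition maximal_chains :: "'a::order set \<Rightarrow> 'a set set" where
  "maximal_chains P = {C. is_chain P C \<and> (\<forall>D. is_chain P D \<and> C \<subseteq> D \<longrightarrow> D = C)}"

definition covers :: "'a::order set \<Rightarrow> 'a \<Rightarrow> 'a \<Rightarrow> bool" where
  "covers P y x \<longleftrightarrow> x \<in> P \<and> y \<in> P \<and> x < y \<and> \<not> (\<exists>z\<in>P. x < z \<and> z < y)"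

definition bowtie_free :: "'a::order set \<Rightarrow> bool" where
  "bowtie_free P \<longleftrightarrow> \<not> (\<exists>a\<in>P. \<exists>b\<in>P. \<exists>c\<in>P. \<exists>d\<in>P. distinct [a, b, c, d] \<and>
      covers P a c \<and> covers P a d \<and> covers P b c \<and> covers P b d)"

definition bounded_poset :: "'a::order set \<Rightarrow> 'a \<Rightarrow> 'a \<Rightarrow> bool" where
  "bounded_poset P zh oh \<longleftrightarrow> zh \<in> P \<and> oh \<in> P \<and> (\<forall>x\<in>P. zh \<le> x \<and> x \<le> oh)"

text \<open>Graded of rank n: every maximal chain has length n (i.e. n+1 elements).\<close>
definition graded_of_rank :: "'a::order set \<Rightarrow> nat \<Rightarrow> bool" where
  "graded_of_rank P n \<longleftrightarrow> (\<forall>C\<in>maximal_chains P. card C = n + 1)"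

text \<open>Rank of x: length of a longest chain in the interval below x (equal to the
  length of any maximal chain of [0-hat, x] in a graded poset).\<close>
definition rank :: "'a::order set \<Rightarrow> 'a \<Rightarrow> nat" where
  "rank P x = Max {card C - 1 | C. is_chain P C \<and> (\<forall>y\<in>C. y \<le> x)}"

text \<open>Monomials x_1^(a 1) x_2^(a 2) ... : exponent vectors with finite support,
  variables indexed from 1 (so a 0 = 0). A formal power series is identified with
  its coefficient function on monomials.\<close>
definition monomials :: "(nat \<Rightarrow> nat) set" where
  "monomials = {a. finite {i. a i \<noteq> 0} \<and> a 0 = 0}"

text \<open>Coefficient of x^a in F_P: multichains 0-hat = t_0 \<le> ... \<le> t_{k-1} < t_k = 1-hat
  (given as the list [t_0,...,t_k]) with monomial x_1^rk(t_0,t_1) ... x_k^rk(t_{k-1},t_k) = x^a.\<close>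
definition F_coeff :: "'a::order set \<Rightarrow> 'a \<Rightarrow> 'a \<Rightarrow> (nat \<Rightarrow> nat) \<Rightarrow> int" where
  "F_coeff P zh oh a = int (card {ts :: 'a list.
      let k = length ts - 1 in
      length ts \<ge> 2 \<and> set ts \<subseteq> P \<and> ts ! 0 = zh \<and> ts ! k = oh \<and>
      (\<forall>i. 1 \<le> i \<and> i \<le> k \<longrightarrow> ts ! (i - 1) \<le> ts ! i) \<and>
      ts ! (k - 1) < ts ! k \<and>
      (\<forall>i\<ge>1. a i = (if i \<le> k then rank P (ts ! i) - rank P (ts ! (i - 1)) else 0))})"

text \<open>Coefficient of x^a in the fundamental quasisymmetric function
  L_{S,n} = sum over 1 \<le> i_1 \<le> ... \<le> i_n with i_j < i_{j+1} for j \<in> S of x_{i_1}...x_{i_n}.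
  The index sequence (i_1,...,i_n) is a function on {1..n}, extended by 0.\<close>
definition L_coeff :: "nat set \<Rightarrow> nat \<Rightarrow> (nat \<Rightarrow> nat) \<Rightarrow> int" where
  "L_coeff S n a = int (card {ix :: nat \<Rightarrow> nat.
      (\<forall>j. j \<notin> {1..n} \<longrightarrow> ix j = 0) \<and> (\<forall>j\<in>{1..n}. 1 \<le> ix j) \<and>
      (\<forall>j\<in>{1..<n}. ix j \<le> ix (Suc j)) \<and> (\<forall>j\<in>S. ix j < ix (Suc j)) \<and>
      (\<forall>m\<ge>1. card {j\<in>{1..n}. ix j = m} = a m)})"

text \<open>Value of the character chi_P on the basis element T_{i_1} ... T_{i_k} (word [i_1,..,i_k])
  of H_n(0) acting on C M(P) with T_i acting as -U_i: the trace of
  (-U_{i_1}) o ... o (-U_{i_k}), i.e. (-1)^k times the number of fixed maximal chains.\<close>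
definition chi_P :: "'a::order set \<Rightarrow> (nat \<Rightarrow> 'a set \<Rightarrow> 'a set) \<Rightarrow> nat list \<Rightarrow> int" where
  "chi_P P U w = (-1) ^ length w *
      int (card {m \<in> maximal_chains P. foldr U w m = m})"

text \<open>Character chi_S of the one-dimensional representation T_i \<mapsto> -1 (i \<in> S), 0 (i \<notin> S).\<close>
definition chi_S :: "nat set \<Rightarrow> nat list \<Rightarrow> int" where
  "chi_S S w = prod_list (map (\<lambda>i. if i \<in> S then -1 else 0) w)"

text \<open>Writing chi_P = sum_S c_S chi_S (in the
  Grothendieck group; the chi_S are linearly independent, so c is unique),
  ch(chi_P) = sum_S c_S L_{S,n}; writing F_P = sum_S d_S L_{S,n},
  omega F_P = sum_S d_S L_{[n-1]-S,n}.\<close>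
definition omegaF_eq_ch :: "'a::order set \<Rightarrow> 'a \<Rightarrow> 'a \<Rightarrow> nat \<Rightarrow> (nat \<Rightarrow> 'a set \<Rightarrow> 'a set) \<Rightarrow> bool" where
  "omegaF_eq_ch P zh oh n U \<longleftrightarrow>
     (\<exists>c d :: nat set \<Rightarrow> int.
        (\<forall>w. set w \<subseteq> {1..<n} \<longrightarrow>
              chi_P P U w = (\<Sum>S\<in>Pow {1..<n}. c S * chi_S S w)) \<and>
        (\<forall>a\<in>monomials. F_coeff P zh oh a = (\<Sum>S\<in>Pow {1..<n}. d S * L_coeff S n a)) \<and>
        (\<forall>a\<in>monomials. (\<Sum>S\<in>Pow {1..<n}. d S * L_coeff ({1..<n} - S) n a)
                        = (\<Sum>S\<in>Pow {1..<n}. c S * L_coeff S n a)))"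

definition good_action ::
  "'a::order set \<Rightarrow> 'a \<Rightarrow> 'a \<Rightarrow> nat \<Rightarrow> (nat \<Rightarrow> 'a set \<Rightarrow> 'a set) \<Rightarrow> bool" where
  "good_action P zh oh n U \<longleftrightarrow>
     (\<forall>i\<in>{1..<n}. \<forall>m\<in>maximal_chains P. U i m \<in> maximal_chains P) \<and>
     (\<forall>i\<in>{1..<n}. \<forall>m\<in>maximal_chains P.
         {x \<in> U i m. rank P x \<noteq> i} = {x \<in> m. rank P x \<noteq> i}) \<and>
     (\<forall>i\<in>{1..<n}. \<forall>m\<in>maximal_chains P. U i (U i m) = U i m) \<and>
     (\<forall>i\<in>{1..<n}. \<forall>j\<in>{1..<n}. \<forall>m\<in>maximal_chains P.
         (i \<ge> j + 2 \<or> j \<ge> i + 2) \<longrightarrow> U i (U j m) = U j (U i m)) \<and>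
     (\<forall>i. i \<in> {1..<n} \<and> Suc i \<in> {1..<n} \<longrightarrow> (\<forall>m\<in>maximal_chains P.
         U i (U (Suc i) (U i m)) = U (Suc i) (U i (U (Suc i) m)))) \<and>
     omegaF_eq_ch P zh oh n U"

definition descents :: "nat \<Rightarrow> (nat \<Rightarrow> 'a set \<Rightarrow> 'a set) \<Rightarrow> 'a set \<Rightarrow> nat set" where
  "descents n U m = {i \<in> {1..<n}. U i m \<noteq> m}"

end

theory Submission
  imports Defs
begin

lemma chain_sub: "is_chain P C \<Longrightarrow> C \<subseteq> P" by (simp add: is_chain_def)

locale ctx =
  fixes P :: "'a::order set" and zh oh :: 'a and n :: nat and U :: "nat \<Rightarrow> 'a set \<Rightarrow> 'a set"
  assumes fin: "finite P" and bnd: "bounded_poset P zh oh" and grd: "graded_of_rank P n"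
    and good: "good_action P zh oh n U"
begin

lemma zh_in: "zh \<in> P" and oh_in: "oh \<in> P" and zh_le: "x \<in> P \<Longrightarrow> zh \<le> x" and le_oh: "x \<in> P \<Longrightarrow> x \<le> oh"
  using bnd by (auto simp: bounded_poset_def)

lemma chain_fin: "is_chain P C \<Longrightarrow> finite C"
  using fin chain_sub finite_subset by blast

lemma rank_set_fin: "finite {card C - 1 | C. is_chain P C \<and> (\<forall>y\<in>C. y \<le> x)}"
proof -
  have "{C. is_chain P C \<and> (\<forall>y\<in>C. y \<le> x)} \<subseteq> Pow P" by (auto simp: is_chain_def)
  hence "finite {C. is_chain P C \<and> (\<forall>y\<in>C. y \<le> x)}" using fin finite_subset by blast
  thus ?thesis by (simp add: setcompr_eq_image)
qed

lemma rank_ge: "is_chain P C \<Longrightarrow> \<forall>y\<in>C. y \<le> x \<Longrightarrow> card C - 1 \<le> rank P x"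
  unfolding rank_def by (rule Max_ge[OF rank_set_fin]) blast

lemma rank_obtain: "\<exists>C. is_chain P C \<and> (\<forall>y\<in>C. y \<le> x) \<and> rank P x = card C - 1"
proof -
  have "is_chain P {}" by (simp add: is_chain_def)
  hence ne: "{card C - 1 | C. is_chain P C \<and> (\<forall>y\<in>C. y \<le> x)} \<noteq> {}" by blast
  show ?thesis using Max_in[OF rank_set_fin ne] unfolding rank_def by auto
qed

lemma chain_ins_top: "is_chain P C \<Longrightarrow> y \<in> P \<Longrightarrow> \<forall>z\<in>C. z \<le> y \<Longrightarrow> is_chain P (insert y C)"
  by (auto simp: is_chain_def)

lemma chain_ins_bot: "is_chain P C \<Longrightarrow> y \<in> P \<Longrightarrow> \<forall>z\<in>C. y \<le> z \<Longrightarrow> is_chain P (insert y C)"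
  by (auto simp: is_chain_def)

lemma rank_less: assumes "x \<in> P" "y \<in> P" "x < y" shows "rank P x < rank P y"
proof -
  obtain C where C: "is_chain P C" "\<forall>z\<in>C. z \<le> x" "rank P x = card C - 1" using rank_obtain by blast
  let ?C = "insert y (insert x C)"
  have fC: "finite C" using chain_fin C(1) .
  have c1: "is_chain P (insert x C)" using chain_ins_top C assms by blast
  have xy: "x \<le> y" using assms(3) by simp
  have ay: "\<forall>z\<in>insert x C. z \<le> y" using C(2) xy order_trans by blast
  have ch: "is_chain P ?C" using chain_ins_top[OF c1 assms(2) ay] .
  have "\<forall>z\<in>?C. z \<le> y" using ay by simp
  hence r: "card ?C - 1 \<le> rank P y" using rank_ge ch by blast
  have yn: "y \<notin> C" using C(2) assms(3) by (meson leD)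
  have "card ?C \<ge> card (insert y C)" by (rule card_mono) (use fC in auto)
  hence a: "card ?C \<ge> card C + 1" using fC yn by simp
  have "card ?C \<ge> card {x,y}" by (rule card_mono) (use fC in auto)
  hence b: "card ?C \<ge> 2" using assms(3) by simp
  show ?thesis using a b r C(3) by linarith
qed

lemma rank_mono: "x \<in> P \<Longrightarrow> y \<in> P \<Longrightarrow> x \<le> y \<Longrightarrow> rank P x \<le> rank P y"
  using rank_less[of x y] by (cases "x = y") (auto simp: less_le)

lemma extend_max: assumes "is_chain P C" shows "\<exists>m\<in>maximal_chains P. C \<subseteq> m"
proof -
  have "\<exists>m. (is_chain P m \<and> C \<subseteq> m) \<and> (\<forall>D. is_chain P D \<and> C \<subseteq> D \<longrightarrow> card D \<le> card m)"
    apply (rule ex_has_greatest_nat[where P="\<lambda>m. is_chain P m \<and> C \<subseteq> m" and f=card and b="Suc (card P)"])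
    using assms apply blast
    using fin by (auto simp: is_chain_def less_Suc_eq_le intro: card_mono)
  then obtain m where m: "is_chain P m" "C \<subseteq> m" "\<And>D. is_chain P D \<Longrightarrow> C \<subseteq> D \<Longrightarrow> card D \<le> card m"
    by blast
  have "m \<in> maximal_chains P"
    unfolding maximal_chains_def
  proof (intro CollectI conjI allI impI)
    show "is_chain P m" by fact
    fix D assume D: "is_chain P D \<and> m \<subseteq> D"
    thus "D = m" using m(3)[of D] m(2) chain_fin card_seteq by blast
  qed
  thus ?thesis using m by blast
qed

lemma mc_chain: "m \<in> maximal_chains P \<Longrightarrow> is_chain P m"
  by (simp add: maximal_chains_def)

lemma mc_card: "m \<in> maximal_chains P \<Longrightarrow> card m = n + 1"
  using grd by (simp add: graded_of_rank_def)

lemma mc_max: "m \<in> maximal_chains P \<Longrightarrow> is_chain P D \<Longrightarrow> m \<subseteq> D \<Longrightarrow> D = m"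
  by (simp add: maximal_chains_def)

lemma mc_zh: assumes "m \<in> maximal_chains P" shows "zh \<in> m"
proof -
  have "is_chain P (insert zh m)" using mc_chain[OF assms] zh_in zh_le chain_ins_bot chain_sub by blast
  thus ?thesis using mc_max[OF assms] by blast
qed

lemma mc_oh: assumes "m \<in> maximal_chains P" shows "oh \<in> m"
proof -
  have "is_chain P (insert oh m)" using mc_chain[OF assms] oh_in le_oh chain_ins_top chain_sub by blast
  thus ?thesis using mc_max[OF assms] by blast
qed

lemma chain_card_le: assumes "is_chain P C" shows "card C \<le> n + 1"
proof -
  obtain m where m: "m \<in> maximal_chains P" "C \<subseteq> m" using extend_max[OF assms] by blast
  have "card C \<le> card m" by (rule card_mono[OF chain_fin[OF mc_chain[OF m(1)]] m(2)])
  thus ?thesis using mc_card[OF m(1)] by simp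
qed

lemma chain_empty: "is_chain P {}" by (simp add: is_chain_def)

lemma mc_ex: "\<exists>m. m \<in> maximal_chains P"
  using extend_max[OF chain_empty] by blast

lemma rank_zh: "rank P zh = 0"
proof -
  obtain C where C: "is_chain P C" "\<forall>z\<in>C. z \<le> zh" "rank P zh = card C - 1" using rank_obtain by blast
  have "C \<subseteq> {zh}"
  proof
    fix z assume z: "z \<in> C"
    hence "z \<in> P" using chain_sub[OF C(1)] by blast
    hence "zh \<le> z" by (rule zh_le)
    moreover have "z \<le> zh" using C(2) z by blast
    ultimately show "z \<in> {zh}" by simp
  qed
  hence "card C \<le> card {zh}" by (intro card_mono) auto
  hence "card C \<le> 1" by simp
  thus ?thesis using C by simp
qed

lemma rank_oh: "rank P oh = n"
proof -
  obtain C where C: "is_chain P C" "\<forall>z\<in>C. z \<le> oh" "rank P oh = card C - 1" using rank_obtain by blast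
  obtain m where m: "m \<in> maximal_chains P" using mc_ex by blast
  have "\<forall>z\<in>m. z \<le> oh" using le_oh chain_sub[OF mc_chain[OF m]] by blast
  hence "card m - 1 \<le> rank P oh" using rank_ge mc_chain[OF m] by blast
  hence a: "n \<le> rank P oh" using mc_card[OF m] by simp
  have "rank P oh \<le> n" using C(3) chain_card_le[OF C(1)] by simp
  thus ?thesis using a by simp
qed

lemma rank_le_n: "x \<in> P \<Longrightarrow> rank P x \<le> n"
  using rank_mono[OF _ oh_in le_oh] rank_oh by simp

lemma rank0: "x \<in> P \<Longrightarrow> rank P x = 0 \<Longrightarrow> x = zh"
  using rank_less[of zh x] zh_le zh_in rank_zh by (cases "x = zh") (auto simp: less_le)

lemma rankn: "x \<in> P \<Longrightarrow> rank P x = n \<Longrightarrow> x = oh"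
  using rank_less[of x oh] le_oh oh_in rank_oh by (cases "x = oh") (auto simp: less_le)

lemma chain_cmp: "is_chain P C \<Longrightarrow> x \<in> C \<Longrightarrow> y \<in> C \<Longrightarrow> x \<le> y \<or> y \<le> x"
  by (simp add: is_chain_def)

lemma chain_rank_less: assumes "is_chain P C" "x \<in> C" "y \<in> C" "x < y" shows "rank P x < rank P y"
  using rank_less assms chain_sub by blast

lemma rank_inj: assumes "is_chain P C" shows "inj_on (rank P) C"
proof
  fix x y assume xy: "x \<in> C" "y \<in> C" "rank P x = rank P y"
  show "x = y"
  proof (rule ccontr)
    assume ne: "x \<noteq> y"
    have "x < y \<or> y < x" using chain_cmp[OF assms xy(1,2)] ne by (auto simp: less_le)
    thus False using chain_rank_less[OF assms xy(1,2)] chain_rank_less[OF assms xy(2,1)] xy(3) by auto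
  qed
qed

lemma mc_rank_image: assumes "m \<in> maximal_chains P" shows "rank P ` m = {0..n}"
proof -
  have "rank P ` m \<subseteq> {0..n}" using rank_le_n chain_sub[OF mc_chain[OF assms]] by auto
  moreover have "card (rank P ` m) = card {0..n}"
    using card_image[OF rank_inj[OF mc_chain[OF assms]]] mc_card[OF assms] by simp
  ultimately show ?thesis using card_subset_eq[of "{0..n}"] by blast
qed

lemma chain_le_of_rank: assumes "is_chain P C" "x \<in> C" "y \<in> C" "rank P x \<le> rank P y" shows "x \<le> y"
proof (rule ccontr)
  assume "\<not> x \<le> y"
  hence "y < x" using chain_cmp[OF assms(1-3)] by (auto simp: less_le)
  thus False using chain_rank_less[OF assms(1,3,2)] assms(4) by simp
qed

end

primrec Wl :: "nat \<Rightarrow> nat \<Rightarrow> nat list" where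
  "Wl a 0 = []"
| "Wl a (Suc l) = [a..<a + Suc l] @ Wl a l"

lemma Wl_set: "set (Wl a l) = {a..<a+l}"
  by (induction l) auto

context ctx begin

lemmas G = good[unfolded good_action_def]
lemmas G1 = G[THEN conjunct1]
lemmas G2 = G[THEN conjunct2, THEN conjunct1]
lemmas G3 = G[THEN conjunct2, THEN conjunct2, THEN conjunct1]
lemmas G4 = G[THEN conjunct2, THEN conjunct2, THEN conjunct2, THEN conjunct1]
lemmas G5 = G[THEN conjunct2, THEN conjunct2, THEN conjunct2, THEN conjunct2, THEN conjunct1]
lemmas G6 = G[THEN conjunct2, THEN conjunct2, THEN conjunct2, THEN conjunct2, THEN conjunct2]

lemma U_mc: "i \<in> {1..<n} \<Longrightarrow> m \<in> maximal_chains P \<Longrightarrow> U i m \<in> maximal_chains P"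
  using G1 by blast

lemma U_keep: assumes "i \<in> {1..<n}" "m \<in> maximal_chains P" "x \<in> m" "rank P x \<noteq> i"
  shows "x \<in> U i m"
proof -
  have "{x \<in> U i m. rank P x \<noteq> i} = {x \<in> m. rank P x \<noteq> i}"
    using G2 assms(1,2) by blast
  thus ?thesis using assms(3,4) by blast
qed

lemma U_idem: "i \<in> {1..<n} \<Longrightarrow> m \<in> maximal_chains P \<Longrightarrow> U i (U i m) = U i m"
  using G3 by blast

lemma U_comm: "i \<in> {1..<n} \<Longrightarrow> j \<in> {1..<n} \<Longrightarrow> m \<in> maximal_chains P \<Longrightarrow> i \<ge> j + 2 \<or> j \<ge> i + 2
  \<Longrightarrow> U i (U j m) = U j (U i m)"
  using G4 by blast

lemma U_braid: "i \<in> {1..<n} \<Longrightarrow> Suc i \<in> {1..<n} \<Longrightarrow> m \<in> maximal_chains P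
  \<Longrightarrow> U i (U (Suc i) (U i m)) = U (Suc i) (U i (U (Suc i) m))"
  using G5 by blast

lemma foldr_mc: "set w \<subseteq> {1..<n} \<Longrightarrow> m \<in> maximal_chains P \<Longrightarrow> foldr U w m \<in> maximal_chains P"
  by (induction w) (auto intro: U_mc)

lemma foldr_comm: "set w \<subseteq> {1..<n} \<Longrightarrow> i \<in> {1..<n} \<Longrightarrow> \<forall>l\<in>set w. i \<ge> l + 2 \<or> l \<ge> i + 2
  \<Longrightarrow> m \<in> maximal_chains P \<Longrightarrow> foldr U w (U i m) = U i (foldr U w m)"
proof (induction w)
  case Nil
  then show ?case by simp
next
  case (Cons l w)
  have "foldr U (l # w) (U i m) = U l (U i (foldr U w m))" using Cons by simp
  also have "\<dots> = U i (U l (foldr U w m))"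
    using Cons.prems by (intro U_comm[symmetric] foldr_mc) auto
  finally show ?case by simp
qed

lemma foldr_keep: "set w \<subseteq> {1..<n} \<Longrightarrow> m \<in> maximal_chains P \<Longrightarrow> x \<in> m \<Longrightarrow> rank P x \<notin> set w
  \<Longrightarrow> x \<in> foldr U w m"
  by (induction w) (auto intro!: U_keep foldr_mc)

lemma R_shift: assumes "1 \<le> a" "a \<le> i" "i < j" "j < n" "m \<in> maximal_chains P"
  shows "foldr U [a..<Suc j] (U i m) = U (Suc i) (foldr U [a..<Suc j] m)"
proof -
  have split: "[a..<Suc j] = [a..<i] @ [i, Suc i] @ [Suc (Suc i)..<Suc j]"
  proof -
    have "[a..<Suc j] = [a..<i] @ [i..<Suc j]" using upt_add_eq_append[of a i "Suc j - i"] assms by simp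
    moreover have "[i..<Suc j] = [i, Suc i] @ [Suc (Suc i)..<Suc j]"
      using assms by (simp add: upt_conv_Cons)
    ultimately show ?thesis by simp
  qed
  let ?y = "foldr U [Suc (Suc i)..<Suc j] m"
  have y: "?y \<in> maximal_chains P" using assms by (intro foldr_mc) auto
  have c1: "foldr U [Suc (Suc i)..<Suc j] (U i m) = U i ?y"
    using assms by (intro foldr_comm) auto
  have br: "U i (U (Suc i) (U i ?y)) = U (Suc i) (U i (U (Suc i) ?y))"
    using assms y by (intro U_braid) auto
  have c2: "foldr U [a..<i] (U (Suc i) z) = U (Suc i) (foldr U [a..<i] z)" if "z \<in> maximal_chains P" for z
    using assms that by (intro foldr_comm) auto
  have z: "U i (U (Suc i) ?y) \<in> maximal_chains P" using assms y by (intro U_mc) auto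
  show ?thesis unfolding split using c1 br c2[OF z] by simp
qed

lemma Wl_zero: assumes "1 \<le> a" "a + l \<le> n" "m \<in> maximal_chains P"
  shows "a \<le> i \<Longrightarrow> i < a + l \<Longrightarrow> U i (foldr U (Wl a l) m) = foldr U (Wl a l) m"
  using assms(2)
proof (induction l arbitrary: i)
  case 0
  then show ?case by simp
next
  case (Suc l)
  let ?y = "foldr U (Wl a l) m"
  have y: "?y \<in> maximal_chains P" using Suc.prems assms by (intro foldr_mc) (auto simp: Wl_set)
  have e: "foldr U (Wl a (Suc l)) m = foldr U [a..<Suc (a + l)] ?y" by simp
  show ?case
  proof (cases "i = a")
    case True
    have ee: "foldr U [a..<Suc (a + l)] ?y = U a (foldr U [Suc a..<Suc (a+l)] ?y)"
      by (simp only: upt_conv_Cons[of a "Suc (a+l)"] less_Suc_eq_le le_add1 foldr.simps o_apply simp_thms)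
    have "foldr U [Suc a..<Suc (a+l)] ?y \<in> maximal_chains P"
      using assms Suc.prems y by (intro foldr_mc[OF _ y]) auto
    moreover have "a \<in> {1..<n}" using assms Suc.prems by auto
    ultimately show ?thesis unfolding e ee True using U_idem by blast
  next
    case False
    then obtain i' where i': "i = Suc i'" "a \<le> i'" using Suc.prems(1) by (cases i) auto
    have "U i (foldr U [a..<Suc (a + l)] ?y) = foldr U [a..<Suc (a + l)] (U i' ?y)"
      unfolding i'(1) using i' Suc.prems assms y by (intro R_shift[symmetric]) auto
    also have "U i' ?y = ?y" using Suc.IH[of i'] i' Suc.prems by simp
    finally show ?thesis unfolding e .
  qed
qed

lemma zero_word_aux:
  "\<forall>J. J \<subseteq> {1..<n} \<and> (\<forall>j\<in>J. j < k) \<longrightarrow>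
     (\<exists>w. set w = J \<and> (\<forall>m\<in>maximal_chains P. \<forall>i\<in>J. U i (foldr U w m) = foldr U w m))"
proof (induction k rule: less_induct)
  case (less k)
  show ?case
  proof (intro allI impI)
    fix J assume J: "J \<subseteq> {1..<n} \<and> (\<forall>j\<in>J. j < k)"
    show "\<exists>w. set w = J \<and> (\<forall>m\<in>maximal_chains P. \<forall>i\<in>J. U i (foldr U w m) = foldr U w m)"
    proof (cases "J = {}")
      case True
      then show ?thesis by (intro exI[of _ "[]"]) simp
    next
      case False
      have finJ: "finite J" using J finite_subset by blast
      define b where "b = Max J"
      have bJ: "b \<in> J" using False finJ b_def by simp
      have bmax: "\<forall>j\<in>J. j \<le> b" using finJ b_def by simp
      define a where "a = (LEAST a'. {a'..b} \<subseteq> J)"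
      have ab: "{a..b} \<subseteq> J" unfolding a_def by (rule LeastI[of _ b]) (use bJ in auto)
      have amin: "\<And>a'. {a'..b} \<subseteq> J \<Longrightarrow> a \<le> a'" unfolding a_def by (rule Least_le)
      have aleb: "a \<le> b" using amin[of b] bJ by auto
      have a1: "1 \<le> a"
      proof (rule ccontr)
        assume "\<not> 1 \<le> a"
        hence "a \<in> J" using ab aleb by auto
        thus False using J \<open>\<not> 1 \<le> a\<close> by auto
      qed
      have am1: "a - 1 \<notin> J"
      proof
        assume "a - 1 \<in> J"
        have "{a - 1..b} \<subseteq> J"
        proof
          fix x assume "x \<in> {a - 1..b}"
          hence "x = a - 1 \<or> x \<in> {a..b}" by auto
          thus "x \<in> J" using ab \<open>a - 1 \<in> J\<close> by blast
        qed
        hence "a \<le> a - 1" by (rule amin)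
        thus False using a1 by simp
      qed
      define J' where "J' = J - {a..b}"
      have J'b: "\<forall>j\<in>J'. j + 2 \<le> a"
      proof
        fix j assume j: "j \<in> J'"
        hence "j < a" using bmax J'_def by fastforce
        moreover have "j \<noteq> a - 1" using j am1 J'_def by auto
        ultimately show "j + 2 \<le> a" by simp
      qed
      have bk: "b < k" using J bJ by blast
      have c1: "\<forall>j\<in>J'. j < a - 1" using J'b by fastforce
      have c2: "J' \<subseteq> {1..<n}" using J J'_def by auto
      have c3: "J' \<subseteq> {1..<n} \<and> (\<forall>j\<in>J'. j < a - 1)" using c1 c2 by blast
      have ak: "a - 1 < k" using aleb bk by simp
      have IH': "\<forall>J. J \<subseteq> {1..<n} \<and> (\<forall>j\<in>J. j < a - 1) \<longrightarrow>
         (\<exists>w. set w = J \<and> (\<forall>m\<in>maximal_chains P. \<forall>i\<in>J. U i (foldr U w m) = foldr U w m))"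
        by (rule less.IH[OF ak])
      obtain w' where w': "set w' = J'"
        "\<forall>m\<in>maximal_chains P. \<forall>i\<in>J'. U i (foldr U w' m) = foldr U w' m"
        using IH'[rule_format, OF c3] by blast
      define l where "l = Suc b - a"
      have bn: "b < n" using J bJ by auto
      have al: "a + l \<le> n" "{a..<a+l} = {a..b}" using bn aleb l_def by auto
      define w where "w = Wl a l @ w'"
      have setw: "set w = J" unfolding w_def using Wl_set al w' J'_def ab by auto
      have w'n: "set w' \<subseteq> {1..<n}" using w' J'_def J by auto
      show ?thesis
      proof (intro exI conjI ballI)
        show "set w = J" by (rule setw)
        fix m i assume m: "m \<in> maximal_chains P" and i: "i \<in> J"
        let ?y = "foldr U w' m"
        have y: "?y \<in> maximal_chains P" using foldr_mc[OF w'n m] .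
        have e: "foldr U w m = foldr U (Wl a l) ?y" by (simp add: w_def)
        show "U i (foldr U w m) = foldr U w m"
        proof (cases "i \<in> {a..b}")
          case True
          then show ?thesis unfolding e using Wl_zero[OF a1 al(1) y, of i] al(2) by auto
        next
          case False
          hence iJ': "i \<in> J'" using i J'_def by simp
          have "U i (foldr U (Wl a l) ?y) = foldr U (Wl a l) (U i ?y)"
            using iJ' J'b J al ab Wl_set y a1 c2 by (intro foldr_comm[symmetric]) auto
          also have "U i ?y = ?y" using w'(2) m iJ' by blast
          finally show ?thesis unfolding e .
        qed
      qed
    qed
  qed
qed

lemma zero_word: "J \<subseteq> {1..<n} \<Longrightarrow>
   \<exists>w. set w = J \<and> (\<forall>m\<in>maximal_chains P. \<forall>i\<in>J. U i (foldr U w m) = foldr U w m)"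
proof -
  assume J: "J \<subseteq> {1..<n}"
  hence "\<forall>j\<in>J. j < n" by auto
  thus ?thesis using zero_word_aux[of n] J by blast
qed

end

definition aT :: "(nat \<Rightarrow> nat) \<Rightarrow> nat \<Rightarrow> nat \<Rightarrow> nat" where
  "aT r K i = (if 1 \<le> i \<and> i \<le> K then r i - r (i - 1) else 0)"

definition ix0 :: "(nat \<Rightarrow> nat) \<Rightarrow> nat \<Rightarrow> nat \<Rightarrow> nat" where
  "ix0 r n j = (if j \<in> {1..n} then (LEAST i. j \<le> r i) else 0)"

lemma ix0_char:
  assumes sm: "strict_mono r" and r0: "r 0 = 0" and rK: "r K = n" and j: "j \<in> {1..n}"
  shows "ix0 r n j = i \<longleftrightarrow> (1 \<le> i \<and> i \<le> K \<and> r (i - 1) < j \<and> j \<le> r i)"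
proof -
  define i0 where "i0 = (LEAST i. j \<le> r i)"
  have e: "ix0 r n j = i0" using j by (simp add: ix0_def i0_def)
  have a: "j \<le> r i0" unfolding i0_def by (rule LeastI[of _ K]) (use j rK in auto)
  have b: "i0 \<le> K" unfolding i0_def by (rule Least_le) (use j rK in auto)
  have c: "i0 \<noteq> 0" using a r0 j by (cases "i0 = 0") auto
  have d: "r (i0 - 1) < j"
  proof -
    have "i0 - 1 < i0" using c by simp
    hence "\<not> j \<le> r (i0 - 1)" unfolding i0_def by (rule not_less_Least)
    thus ?thesis by simp
  qed
  have uniq: "i = i0" if "1 \<le> i" "i \<le> K" "r (i - 1) < j" "j \<le> r i"
  proof (rule ccontr)
    assume "i \<noteq> i0"
    hence "i < i0 \<or> i0 < i" by auto
    thus False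
    proof
      assume "i < i0"
      hence "i \<le> i0 - 1" by simp
      hence "r i \<le> r (i0 - 1)" using sm by (simp add: strict_mono_less_eq)
      thus False using d that by simp
    next
      assume "i0 < i"
      hence "i0 \<le> i - 1" by simp
      hence "r i0 \<le> r (i - 1)" using sm by (simp add: strict_mono_less_eq)
      thus False using a that by simp
    qed
  qed
  show ?thesis unfolding e using a b c d uniq by auto
qed

lemma ix0_out: "j \<notin> {1..n} \<Longrightarrow> ix0 r n j = 0" by (auto simp: ix0_def)

lemma ix0_content:
  assumes sm: "strict_mono r" and r0: "r 0 = 0" and rK: "r K = n" and m: "1 \<le> m"
  shows "card {j \<in> {1..n}. ix0 r n j = m} = aT r K m"
proof (cases "m \<le> K")
  case True
  have "{j \<in> {1..n}. ix0 r n j = m} = {r (m - 1)<..r m}"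
  proof -
    have rm: "r m \<le> n" using True sm rK by (metis strict_mono_less_eq)
    show ?thesis
    proof (rule set_eqI)
      fix x
      show "x \<in> {j \<in> {1..n}. ix0 r n j = m} \<longleftrightarrow> x \<in> {r (m - 1)<..r m}"
      proof (cases "x \<in> {1..n}")
        case True
        then show ?thesis using ix0_char[OF sm r0 rK True, of m] \<open>m \<le> K\<close> m by auto
      next
        case False
        then show ?thesis using rm by auto
      qed
    qed
  qed
  thus ?thesis using True m by (simp add: aT_def)
next
  case False
  have "{j \<in> {1..n}. ix0 r n j = m} = {}" using ix0_char[OF sm r0 rK] False by auto
  thus ?thesis using False by (simp add: aT_def)
qed

lemma ix0_step:
  assumes sm: "strict_mono r" and r0: "r 0 = 0" and rK: "r K = n" and j: "j \<in> {1..<n}"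
  shows "ix0 r n j \<le> ix0 r n (Suc j)" and "ix0 r n j < ix0 r n (Suc j) \<longleftrightarrow> j \<in> r ` {1..<K}"
proof -
  have j1: "j \<in> {1..n}" and j2: "Suc j \<in> {1..n}" using j by auto
  define i where "i = ix0 r n j"
  have ic: "1 \<le> i" "i \<le> K" "r (i - 1) < j" "j \<le> r i" using ix0_char[OF sm r0 rK j1, of i] i_def by auto
  have "(ix0 r n j \<le> ix0 r n (Suc j)) \<and> (ix0 r n j < ix0 r n (Suc j) \<longleftrightarrow> j \<in> r ` {1..<K})"
  proof (cases "j = r i")
    case True
    have iK: "i < K" using ic True j rK by (cases "i = K") auto
    have "r i < r (Suc i)" using sm by (simp add: strict_mono_less)
    hence "ix0 r n (Suc j) = Suc i" using ix0_char[OF sm r0 rK j2, of "Suc i"] True iK by simp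
    moreover have "j \<in> r ` {1..<K}" using True iK ic by auto
    ultimately show ?thesis using i_def by simp
  next
    case False
    hence "ix0 r n (Suc j) = i" using ix0_char[OF sm r0 rK j2, of i] ic by simp
    moreover have "j \<notin> r ` {1..<K}"
    proof
      assume "j \<in> r ` {1..<K}"
      then obtain i' where i': "j = r i'" by auto
      have "i - 1 < i'" using ic i' sm by (metis strict_mono_less)
      moreover have "i' < i" using ic i' False sm by (metis le_neq_implies_less strict_mono_less)
      ultimately show False by simp
    qed
    ultimately show ?thesis using i_def by simp
  qed
  thus "ix0 r n j \<le> ix0 r n (Suc j)" "ix0 r n j < ix0 r n (Suc j) \<longleftrightarrow> j \<in> r ` {1..<K}" by auto
qed

lemma wi_mono:
  fixes f :: "nat \<Rightarrow> nat"
  assumes "\<forall>j\<in>{1..<n}. f j \<le> f (Suc j)" "1 \<le> j" "j \<le> j'" "j' \<le> n"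
  shows "f j \<le> f (j'::nat)"
  using assms(3,4)
proof (induction j' rule: dec_induct)
  case base
  then show ?case by simp
next
  case (step k)
  hence "f k \<le> f (Suc k)" using assms(1,2) by auto
  thus ?case using step by simp
qed

lemma wi_le_iff:
  fixes f :: "nat \<Rightarrow> nat"
  assumes "\<forall>j\<in>{1..<n}. f j \<le> f (Suc j)" and j: "j \<in> {1..n}"
  shows "f j \<le> m \<longleftrightarrow> j \<le> card {j' \<in> {1..n}. f j' \<le> m}"
proof
  assume fj: "f j \<le> m"
  have "{1..j} \<subseteq> {j' \<in> {1..n}. f j' \<le> m}"
  proof
    fix x assume x: "x \<in> {1..j}"
    hence "f x \<le> f j" using wi_mono[OF assms(1)] j by auto
    thus "x \<in> {j' \<in> {1..n}. f j' \<le> m}" using fj x j by auto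
  qed
  hence "card {1..j} \<le> card {j' \<in> {1..n}. f j' \<le> m}" by (intro card_mono) auto
  thus "j \<le> card {j' \<in> {1..n}. f j' \<le> m}" by simp
next
  assume c: "j \<le> card {j' \<in> {1..n}. f j' \<le> m}"
  show "f j \<le> m"
  proof (rule ccontr)
    assume fj: "\<not> f j \<le> m"
    have "{j' \<in> {1..n}. f j' \<le> m} \<subseteq> {1..<j}"
    proof
      fix x assume x: "x \<in> {j' \<in> {1..n}. f j' \<le> m}"
      have "x < j"
      proof (rule ccontr)
        assume "\<not> x < j"
        hence "f j \<le> f x" using wi_mono[OF assms(1)] j x by auto
        thus False using x fj by auto
      qed
      thus "x \<in> {1..<j}" using x by auto
    qed
    hence "card {j' \<in> {1..n}. f j' \<le> m} \<le> card {1..<j}" by (intro card_mono) auto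
    thus False using c j by auto
  qed
qed

lemma cum_card:
  fixes f :: "nat \<Rightarrow> nat"
  assumes "\<forall>j\<in>{1..n}. 1 \<le> f j"
  shows "card {j \<in> {1..n::nat}. f j \<le> m} = (\<Sum>m'\<in>{1..m}. card {j \<in> {1..n}. f j = m'})"
proof (induction m)
  case 0
  have "{j \<in> {1..n}. f j \<le> 0} = {}" using assms by fastforce
  then show ?case by simp
next
  case (Suc m)
  have "{j \<in> {1..n}. f j \<le> Suc m} = {j \<in> {1..n}. f j \<le> m} \<union> {j \<in> {1..n}. f j = Suc m}" by auto
  moreover have "card ({j \<in> {1..n}. f j \<le> m} \<union> {j \<in> {1..n}. f j = Suc m}) =
     card {j \<in> {1..n}. f j \<le> m} + card {j \<in> {1..n}. f j = Suc m}"
    by (rule card_Un_disjoint) auto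
  ultimately show ?case using Suc by simp
qed

lemma wi_unique:
  fixes f g :: "nat \<Rightarrow> nat"
  assumes f1: "\<forall>j. j \<notin> {1..n} \<longrightarrow> f j = 0" and f2: "\<forall>j\<in>{1..n}. 1 \<le> f j"
    and f3: "\<forall>j\<in>{1..<n}. f j \<le> f (Suc j)"
    and g1: "\<forall>j. j \<notin> {1..n} \<longrightarrow> g j = 0" and g2: "\<forall>j\<in>{1..n}. 1 \<le> g j"
    and g3: "\<forall>j\<in>{1..<n}. g j \<le> g (Suc j)"
    and c: "\<forall>m\<ge>1. card {j \<in> {1..n}. f j = m} = card {j \<in> {1..n::nat}. g j = m}"
  shows "f = g"
proof
  fix j
  show "f j = g j"
  proof (cases "j \<in> {1..n}")
    case False
    then show ?thesis using f1 g1 by simp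
  next
    case True
    have cc: "card {j' \<in> {1..n}. f j' \<le> m} = card {j' \<in> {1..n}. g j' \<le> m}" for m
      using cum_card[OF f2, of m] cum_card[OF g2, of m] c by simp
    have iff: "f j \<le> m \<longleftrightarrow> g j \<le> m" for m
      using wi_le_iff[OF f3 True, of m] wi_le_iff[OF g3 True, of m] cc[of m] by simp
    show ?thesis using iff[of "f j"] iff[of "g j"] by simp
  qed
qed

lemma L_coeff_aT:
  assumes sm: "strict_mono r" and r0: "r 0 = 0" and rK: "r K = n" and S: "S \<subseteq> {1..<n}"
  shows "L_coeff S n (aT r K) = (if S \<subseteq> r ` {1..<K} then 1 else 0)"
proof -
  let ?Q = "\<lambda>ix. (\<forall>j. j \<notin> {1..n} \<longrightarrow> ix j = 0) \<and> (\<forall>j\<in>{1..n}. 1 \<le> ix j) \<and>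
      (\<forall>j\<in>{1..<n}. ix j \<le> ix (Suc j)) \<and> (\<forall>m\<ge>1. card {j\<in>{1..n}. ix j = m} = aT r K m)"
  let ?f = "ix0 r n"
  have f1: "\<forall>j. j \<notin> {1..n} \<longrightarrow> ?f j = 0" by (simp add: ix0_out)
  have f2: "\<forall>j\<in>{1..n}. 1 \<le> ?f j" using ix0_char[OF sm r0 rK] by blast
  have f3: "\<forall>j\<in>{1..<n}. ?f j \<le> ?f (Suc j)" using ix0_step(1)[OF sm r0 rK] by blast
  have f4: "\<forall>m\<ge>1. card {j\<in>{1..n}. ?f j = m} = aT r K m" using ix0_content[OF sm r0 rK] by blast
  have uq: "ix = ?f" if Q: "?Q ix" for ix
  proof (rule wi_unique)
    show "\<forall>j. j \<notin> {1..n} \<longrightarrow> ix j = 0" using Q by blast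
    show "\<forall>j\<in>{1..n}. 1 \<le> ix j" using Q by blast
    show "\<forall>j\<in>{1..<n}. ix j \<le> ix (Suc j)" using Q by blast
    show "\<forall>j. j \<notin> {1..n} \<longrightarrow> ?f j = 0" by (rule f1)
    show "\<forall>j\<in>{1..n}. 1 \<le> ?f j" by (rule f2)
    show "\<forall>j\<in>{1..<n}. ?f j \<le> ?f (Suc j)" by (rule f3)
    have q4: "\<forall>m\<ge>1. card {j\<in>{1..n}. ix j = m} = aT r K m" using Q by blast
    show "\<forall>m\<ge>1. card {j \<in> {1..n}. ix j = m} = card {j \<in> {1..n}. ?f j = m}"
      using q4 f4 by simp
  qed
  have fS: "(\<forall>j\<in>S. ?f j < ?f (Suc j)) \<longleftrightarrow> S \<subseteq> r ` {1..<K}"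
  proof -
    have "\<forall>j\<in>S. (?f j < ?f (Suc j) \<longleftrightarrow> j \<in> r ` {1..<K})"
      using ix0_step(2)[OF sm r0 rK] S by blast
    thus ?thesis by blast
  qed
  define X where "X = {ix :: nat \<Rightarrow> nat.
      (\<forall>j. j \<notin> {1..n} \<longrightarrow> ix j = 0) \<and> (\<forall>j\<in>{1..n}. 1 \<le> ix j) \<and>
      (\<forall>j\<in>{1..<n}. ix j \<le> ix (Suc j)) \<and> (\<forall>j\<in>S. ix j < ix (Suc j)) \<and>
      (\<forall>m\<ge>1. card {j\<in>{1..n}. ix j = m} = aT r K m)}"
  have sub: "X \<subseteq> {?f}" using uq unfolding X_def by blast
  have eq: "X = (if S \<subseteq> r ` {1..<K} then {?f} else {})"
  proof (cases "S \<subseteq> r ` {1..<K}")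
    case True
    hence "?f \<in> X" unfolding X_def using f1 f2 f3 f4 fS by blast
    thus ?thesis using sub True by auto
  next
    case False
    have "X = {}"
    proof (rule ccontr)
      assume "X \<noteq> {}"
      hence "?f \<in> X" using sub by blast
      hence "\<forall>j\<in>S. ?f j < ?f (Suc j)" unfolding X_def by blast
      thus False using fS False by blast
    qed
    thus ?thesis using False by simp
  qed
  have "L_coeff S n (aT r K) = int (card X)" unfolding L_coeff_def X_def ..
  thus ?thesis using eq by simp
qed

lemma aT_monomial: "aT r K \<in> monomials"
proof -
  have "{i. aT r K i \<noteq> 0} \<subseteq> {1..K}" by (auto simp: aT_def split: if_splits)
  hence "finite {i. aT r K i \<noteq> 0}" using finite_subset by blast
  thus ?thesis by (simp add: monomials_def aT_def)
qed

context ctx begin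

lemma list_mono:
  assumes "\<forall>i. 1 \<le> i \<and> i \<le> k \<longrightarrow> ts ! (i - 1) \<le> ts ! i" "i \<le> i'" "i' \<le> k"
  shows "ts ! i \<le> (ts ! i' :: 'a)"
  using assms(2,3)
proof (induction i' rule: dec_induct)
  case base
  then show ?case by simp
next
  case (step j)
  have h: "ts ! j \<le> ts ! Suc j" using assms(1)[rule_format, of "Suc j"] step by simp
  have ih: "ts ! i \<le> ts ! j" using step by simp
  show ?case by (rule order_trans[OF ih h])
qed

lemma F_coeff_aT:
  assumes sm: "strict_mono r" and r0: "r 0 = 0" and rK: "r K = n" and K1: "1 \<le> K"
  shows "F_coeff P zh oh (aT r K) = int (card {D. is_chain P D \<and> rank P ` D = r ` {1..<K}})"
proof -
  define FS where "FS = {ts :: 'a list.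
      let k = length ts - 1 in
      length ts \<ge> 2 \<and> set ts \<subseteq> P \<and> ts ! 0 = zh \<and> ts ! k = oh \<and>
      (\<forall>i. 1 \<le> i \<and> i \<le> k \<longrightarrow> ts ! (i - 1) \<le> ts ! i) \<and>
      ts ! (k - 1) < ts ! k \<and>
      (\<forall>i\<ge>1. aT r K i = (if i \<le> k then rank P (ts ! i) - rank P (ts ! (i - 1)) else 0))}"
  define B where "B = {D. is_chain P D \<and> rank P ` D = r ` {1..<K}}"
  have rle: "r i \<le> r j" if "i \<le> j" for i j using sm that by (simp add: strict_mono_less_eq)
  have FSD: "length ts = Suc K \<and> (\<forall>i\<le>K. rank P (ts ! i) = r i) \<and> set ts \<subseteq> P \<and> ts ! 0 = zh \<and> ts ! K = oh
     \<and> (\<forall>i. 1 \<le> i \<and> i \<le> K \<longrightarrow> ts ! (i - 1) \<le> ts ! i)"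
    if ts: "ts \<in> FS" for ts
  proof -
    define k where "k = length ts - 1"
    have t1: "length ts \<ge> 2" and t2: "set ts \<subseteq> P" and t3: "ts ! 0 = zh" and t4: "ts ! k = oh"
      and t5: "\<forall>i. 1 \<le> i \<and> i \<le> k \<longrightarrow> ts ! (i - 1) \<le> ts ! i" and t6: "ts ! (k - 1) < ts ! k"
      and t7: "\<forall>i\<ge>1. aT r K i = (if i \<le> k then rank P (ts ! i) - rank P (ts ! (i - 1)) else 0)"
      using ts unfolding FS_def Let_def mem_Collect_eq k_def by blast+
    have inP: "ts ! i \<in> P" if "i \<le> k" for i using t2 that k_def t1 by (metis One_nat_def Suc_pred le_imp_less_Suc
          nat_less_le nth_mem subsetD zero_less_diff numeral_2_eq_2 less_le_trans zero_less_Suc)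
    have rk: "rank P (ts ! i) = r (min i K)" if "i \<le> k" for i
      using that
    proof (induction i)
      case 0
      then show ?case using t3 rank_zh r0 by simp
    next
      case (Suc i)
      have le: "ts ! i \<le> ts ! Suc i" using t5[rule_format, of "Suc i"] Suc.prems by simp
      have rm: "rank P (ts ! i) \<le> rank P (ts ! Suc i)"
        using rank_mono[OF inP inP le] Suc.prems by simp
      have ai: "aT r K (Suc i) = rank P (ts ! Suc i) - rank P (ts ! i)" using t7[rule_format, of "Suc i"] Suc.prems by simp
      have IH: "rank P (ts ! i) = r (min i K)" using Suc by simp
      show ?case
      proof (cases "Suc i \<le> K")
        case True
        hence "aT r K (Suc i) = r (Suc i) - r i" by (simp add: aT_def)
        moreover have "r i \<le> r (Suc i)" using rle by simp
        ultimately show ?thesis using ai IH rm True by simp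
      next
        case False
        hence "aT r K (Suc i) = 0" by (simp add: aT_def)
        thus ?thesis using ai IH rm False by simp
      qed
    qed
    have k1: "1 \<le> k" using t1 k_def by simp
    have "r (min k K) = r K" using rk[of k] t4 rank_oh rK by simp
    hence "min k K = K" using sm by (simp add: strict_mono_eq)
    hence Kk: "K \<le> k" by simp
    have kK: "k = K"
    proof (rule ccontr)
      assume "k \<noteq> K"
      hence "K \<le> k - 1" using Kk by simp
      hence "rank P (ts ! (k - 1)) = n" using rk[of "k - 1"] rK by (simp add: min_absorb2)
      moreover have "rank P (ts ! (k - 1)) < rank P (ts ! k)" using rank_less[OF inP inP t6] by simp
      ultimately show False using t4 rank_oh by simp
    qed
    show ?thesis using kK k_def k1 t2 t3 t4 t5 rk by auto
  qed
  define phi where "phi ts = (\<lambda>i. ts ! i) ` {1..<K}" for ts :: "'a list"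
  have "bij_betw phi FS B"
  proof (rule bij_betw_imageI)
    show "inj_on phi FS"
    proof
      fix t1 t2 assume t1: "t1 \<in> FS" and t2: "t2 \<in> FS" and e: "phi t1 = phi t2"
      note d1 = FSD[OF t1] and d2 = FSD[OF t2]
      show "t1 = t2"
      proof (rule nth_equalityI)
        show "length t1 = length t2" using d1 d2 by simp
        fix i assume "i < length t1"
        hence i: "i \<le> K" using d1 by simp
        show "t1 ! i = t2 ! i"
        proof (cases "i = 0 \<or> i = K")
          case True
          then show ?thesis using d1 d2 by auto
        next
          case False
          hence "t1 ! i \<in> phi t2" using e i unfolding phi_def by auto
          then obtain i' where i': "i' \<in> {1..<K}" "t1 ! i = t2 ! i'" unfolding phi_def by auto
          have "r i = r i'" using d1 d2 i i' False by (metis atLeastLessThan_iff less_imp_le_nat)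
          hence "i = i'" using sm by (simp add: strict_mono_eq)
          thus ?thesis using i' by simp
        qed
      qed
    qed
  next
    show "phi ` FS = B"
    proof
      show "phi ` FS \<subseteq> B"
      proof
        fix D assume "D \<in> phi ` FS"
        then obtain ts where ts: "ts \<in> FS" "D = phi ts" by blast
        note d = FSD[OF ts(1)]
        have inP: "ts ! i \<in> P" if "i \<le> K" for i using d that by (metis le_imp_less_Suc nth_mem subsetD)
        have ch: "is_chain P D" unfolding is_chain_def
        proof (intro conjI ballI)
          show "D \<subseteq> P" using ts(2) inP unfolding phi_def by auto
          fix x y assume "x \<in> D" "y \<in> D"
          then obtain i j where ij: "i \<in> {1..<K}" "j \<in> {1..<K}" "x = ts ! i" "y = ts ! j"
            using ts(2) unfolding phi_def by auto
          show "x \<le> y \<or> y \<le> x"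
          proof (cases "i \<le> j")
            case True
            then show ?thesis using list_mono[of K ts i j] d ij by auto
          next
            case False
            then show ?thesis using list_mono[of K ts j i] d ij by auto
          qed
        qed
        have "rank P ` D = r ` {1..<K}" using ts(2) d unfolding phi_def by (auto simp: image_image)
        thus "D \<in> B" using ch B_def by simp
      qed
    next
      show "B \<subseteq> phi ` FS"
      proof
        fix D assume D: "D \<in> B"
        hence Dc: "is_chain P D" and Dr: "rank P ` D = r ` {1..<K}" using B_def by auto
        have injD: "inj_on (rank P) D" by (rule rank_inj[OF Dc])
        have ex1: "\<exists>!x. x \<in> D \<and> rank P x = r i" if i: "i \<in> {1..<K}" for i
        proof -
          have "r i \<in> r ` {1..<K}" using i by (rule imageI)
          hence "r i \<in> rank P ` D" unfolding Dr .
          then obtain x0 where x0: "r i = rank P x0" "x0 \<in> D" by (rule imageE)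
          obtain x where x: "x \<in> D" "rank P x = r i" using x0 by (intro that[of x0]) simp_all
          show ?thesis
          proof (rule ex1I[of _ x])
            show "x \<in> D \<and> rank P x = r i" using x by (rule conjI)
            fix y assume y: "y \<in> D \<and> rank P y = r i"
            have "rank P y = rank P x" using x(2) y by simp
            thus "y = x" using inj_onD[OF injD] x(1) y by blast
          qed
        qed
        define g where "g i = (if i = 0 then zh else if i = K then oh else (THE x. x \<in> D \<and> rank P x = r i))" for i
        have gD: "g i \<in> D \<and> rank P (g i) = r i" if i: "i \<in> {1..<K}" for i
        proof -
          have "g i = (THE x. x \<in> D \<and> rank P x = r i)" using i g_def by simp
          thus ?thesis using theI'[OF ex1[OF i]] by simp
        qed
        have g0: "g 0 = zh" using g_def by simp
        have gK: "g K = oh" using g_def K1 by simp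
        have gr: "rank P (g i) = r i" if i: "i \<le> K" for i
        proof (cases "i = 0")
          case True thus ?thesis using g0 rank_zh r0 by simp
        next
          case False
          show ?thesis
          proof (cases "i = K")
            case True thus ?thesis using gK rank_oh rK by simp
          next
            case False
            hence "i \<in> {1..<K}" using \<open>i \<noteq> 0\<close> i by simp
            thus ?thesis using gD by blast
          qed
        qed
        have gP: "g i \<in> P" if i: "i \<le> K" for i
        proof (cases "i = 0")
          case True thus ?thesis using g0 zh_in by simp
        next
          case False
          show ?thesis
          proof (cases "i = K")
            case True thus ?thesis using gK oh_in by simp
          next
            case False
            hence "i \<in> {1..<K}" using \<open>i \<noteq> 0\<close> i by simp
            hence "g i \<in> D" using gD by blast
            thus ?thesis using chain_sub[OF Dc] by blast
          qed
        qed
        define ts where "ts = map g [0..<Suc K]"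
        have tsn: "ts ! i = g i" if "i \<le> K" for i
          using that ts_def by (simp del: upt_Suc add: nth_map_upt)
        have len: "length ts = Suc K" using ts_def by simp
        have gmono: "g (i - 1) \<le> g i" if i: "1 \<le> i" "i \<le> K" for i
        proof (cases "i - 1 = 0")
          case True
          have "zh \<le> g i" using zh_le gP i by simp
          thus ?thesis using True g0 by simp
        next
          case False
          show ?thesis
          proof (cases "i = K")
            case True
            have "g (i - 1) \<le> oh" using le_oh gP i by simp
            thus ?thesis using True gK by simp
          next
            case False
            have "1 \<le> i - 1" "i - 1 < K" using \<open>i - 1 \<noteq> 0\<close> i by linarith+
            hence "i - 1 \<in> {1..<K}" by simp
            hence a1: "g (i - 1) \<in> D" using gD by blast
            have "i \<in> {1..<K}" using False i by simp
            hence a2: "g i \<in> D" using gD by blast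
            have "rank P (g (i - 1)) \<le> rank P (g i)" using gr i rle by simp
            thus ?thesis using chain_le_of_rank[OF Dc a1 a2] by simp
          qed
        qed
        have glt: "g (K - 1) < g K"
        proof -
          have le: "g (K - 1) \<le> g K" using gmono K1 by simp
          have "rank P (g (K - 1)) < rank P (g K)" using gr K1 sm
            by (simp add: strict_mono_less)
          hence "g (K - 1) \<noteq> g K" by auto
          thus ?thesis using le by (simp add: less_le)
        qed
        have tsP: "set ts \<subseteq> P"
        proof
          fix x assume "x \<in> set ts"
          hence "x \<in> g ` {0..<Suc K}" using ts_def by (simp del: upt_Suc)
          then obtain i where "i < Suc K" "x = g i" by auto
          thus "x \<in> P" using gP by simp
        qed
        have "ts \<in> FS" unfolding FS_def Let_def mem_Collect_eq len diff_Suc_1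
        proof (intro conjI allI impI)
          show "2 \<le> Suc K" using K1 by simp
          show "set ts \<subseteq> P" by (rule tsP)
          show "ts ! 0 = zh" using tsn[of 0] g0 by simp
          show "ts ! K = oh" using tsn[of K] gK by simp
          show "ts ! (K - 1) < ts ! K" using tsn[of K] tsn[of "K - 1"] glt by simp
        next
          fix i assume i: "1 \<le> i \<and> i \<le> K"
          have h: "i - 1 \<le> K" using i by linarith
          show "ts ! (i - 1) \<le> ts ! i" using i h tsn[of i] tsn[of "i - 1"] gmono[of i] by simp
        next
          fix i :: nat assume i: "1 \<le> i"
          show "aT r K i = (if i \<le> K then rank P (ts ! i) - rank P (ts ! (i - 1)) else 0)"
          proof (cases "i \<le> K")
            case True
            have h: "i - 1 \<le> K" using True by linarith
            thus ?thesis using True i tsn[of i] tsn[of "i - 1"] gr[of i] gr[of "i - 1"] by (simp add: aT_def)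
          next
            case False
            thus ?thesis by (simp add: aT_def)
          qed
        qed
        moreover have "phi ts = D"
        proof
          show "phi ts \<subseteq> D"
          proof
            fix x assume "x \<in> phi ts"
            then obtain i where i: "i \<in> {1..<K}" "x = ts ! i" unfolding phi_def by blast
            thus "x \<in> D" using gD[OF i(1)] tsn[of i] by simp
          qed
          show "D \<subseteq> phi ts"
          proof
            fix x assume x: "x \<in> D"
            hence "rank P x \<in> r ` {1..<K}" using Dr by blast
            then obtain i where i: "i \<in> {1..<K}" "rank P x = r i" by blast
            have "g i = x" using gD[OF i(1)] ex1[OF i(1)] x i(2) by blast
            hence "x = ts ! i" using tsn[of i] i(1) by simp
            thus "x \<in> phi ts" using i(1) unfolding phi_def by blast
          qed
        qed
        ultimately show "D \<in> phi ` FS" by blast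
      qed
    qed
  qed
  hence "card FS = card B" by (rule bij_betw_same_card)
  thus ?thesis unfolding F_coeff_def FS_def B_def by simp
qed

end

lemma chi_S_eval: "chi_S S w = (if set w \<subseteq> S then (-1) ^ length w else 0)"
  by (induction w) (auto simp: chi_S_def)

lemma exists_r:
  fixes n :: nat and T :: "nat set"
  assumes T: "T \<subseteq> {1..<n}" and n1: "1 \<le> n"
  shows "\<exists>(r::nat \<Rightarrow> nat) (K::nat). strict_mono r \<and> r 0 = 0 \<and> r K = n \<and> 1 \<le> K \<and> r ` {1..<K} = T"
proof -
  define V where "V = insert 0 (insert n T)"
  have "finite T" using finite_subset[OF T] by simp
  hence fV: "finite V" using V_def by simp
  obtain xs where xs: "sorted_wrt (<) xs" "set xs = V"
    using ex1_sorted_list_for_set_if_finite[OF fV] by blast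
  have dist: "distinct xs" using xs(1) by (simp add: strict_sorted_iff)
  define K where "K = length xs - 1"
  have Vle: "v \<le> n" if "v \<in> V" for v using that T V_def by auto
  have ne: "xs \<noteq> []" using xs(2) V_def by auto
  have lenK: "length xs = Suc K" using ne K_def by simp
  have lt: "xs ! i < xs ! j" if "i < j" "j \<le> K" for i j
    using sorted_wrt_nth_less[OF xs(1) that(1)] that lenK by simp
  have inV: "xs ! i \<in> V" if "i \<le> K" for i using xs(2) lenK that by (metis le_imp_less_Suc nth_mem)
  have x0: "xs ! 0 = 0"
  proof -
    obtain p where p: "p < length xs" "xs ! p = 0" using xs(2) V_def by (metis in_set_conv_nth insertI1)
    show ?thesis using lt[of 0 p] p lenK by (cases "p = 0") auto
  qed
  have xK: "xs ! K = n"
  proof -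
    obtain p where p: "p < length xs" "xs ! p = n" using xs(2) V_def by (metis in_set_conv_nth insertI1 insertI2)
    have "\<not> p < K" using lt[of p K] p Vle[OF inV[of K]] by auto
    hence "p = K" using p lenK by simp
    thus ?thesis using p by simp
  qed
  have K1: "1 \<le> K"
  proof (rule ccontr)
    assume "\<not> 1 \<le> K" hence "K = 0" by simp
    thus False using x0 xK n1 by simp
  qed
  define r where "r i = (if i \<le> K then xs ! i else n + i)" for i
  have sm: "strict_mono r"
    unfolding strict_mono_Suc_iff
  proof
    fix i
    show "r i < r (Suc i)"
    proof (cases "Suc i \<le> K")
      case True
      then show ?thesis using lt[of i "Suc i"] r_def by simp
    next
      case False
      then show ?thesis using Vle[OF inV[of i]] r_def by auto
    qed
  qed
  have img: "r ` {1..<K} = T"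
  proof
    show "r ` {1..<K} \<subseteq> T"
    proof
      fix v assume "v \<in> r ` {1..<K}"
      then obtain i where i: "i \<in> {1..<K}" "v = xs ! i" using r_def by auto
      have "v \<noteq> 0" using lt[of 0 i] i x0 by auto
      moreover have "v \<noteq> n" using lt[of i K] i xK by auto
      ultimately show "v \<in> T" using inV[of i] i V_def by auto
    qed
  next
    show "T \<subseteq> r ` {1..<K}"
    proof
      fix t assume t: "t \<in> T"
      then obtain p where p: "p < length xs" "xs ! p = t" using xs(2) V_def by (metis in_set_conv_nth insertI2)
      have "t \<noteq> 0" "t \<noteq> n" using t T by auto
      have p0: "p \<noteq> 0"
      proof
        assume "p = 0" thus False using p x0 \<open>t \<noteq> 0\<close> by simp
      qed
      have pK: "p \<noteq> K"
      proof
        assume "p = K" thus False using p xK \<open>t \<noteq> n\<close> by simp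
      qed
      note pp = p0 pK
      hence "p \<in> {1..<K}" using p lenK by auto
      moreover have "r p = t" using p \<open>p \<in> {1..<K}\<close> r_def by simp
      ultimately show "t \<in> r ` {1..<K}" by (metis imageI)
    qed
  qed
  have "r 0 = 0" "r K = n" using x0 xK r_def by simp_all
  thus ?thesis using sm K1 img by blast
qed

lemma compl_sum: "finite U0 \<Longrightarrow> (\<Sum>S\<in>Pow U0. g (U0 - S)) = (\<Sum>R\<in>Pow U0. (g R :: int))"
  by (rule sum.reindex_bij_witness[of _ "\<lambda>S. U0 - S" "\<lambda>S. U0 - S"]) auto

lemma pow_if_sum: "finite U0 \<Longrightarrow> T \<subseteq> U0 \<Longrightarrow>
   (\<Sum>S\<in>Pow U0. if S \<subseteq> T then x S else 0) = (\<Sum>S\<in>Pow T. (x S :: int))"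
proof -
  assume f: "finite U0" and T: "T \<subseteq> U0"
  have "{S \<in> Pow U0. S \<subseteq> T} = Pow T" using T by auto
  thus ?thesis using sum.inter_filter[of "Pow U0" x "\<lambda>S. S \<subseteq> T"] f by simp
qed

lemma mobius:
  assumes f: "finite U0"
    and h: "\<And>T. T \<subseteq> U0 \<Longrightarrow> (\<Sum>S\<in>Pow T. x S) = (\<Sum>S\<in>Pow T. (y S :: int))"
  shows "T \<subseteq> U0 \<Longrightarrow> x T = y T"
proof (induction T rule: measure_induct_rule[where f=card])
  case (less T)
  have fT: "finite T" using less.prems f finite_subset by blast
  have eq: "x S = y S" if "S \<in> Pow T - {T}" for S
  proof -
    have "S \<subset> T" using that by auto
    hence "card S < card T" using fT psubset_card_mono by blast
    thus ?thesis using less.IH[of S] that less.prems by auto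
  qed
  have fP: "finite (Pow T)" using fT by simp
  have "(\<Sum>S\<in>Pow T. x S) = x T + (\<Sum>S\<in>Pow T - {T}. x S)"
    using sum.remove[OF fP, of T x] by simp
  moreover have "(\<Sum>S\<in>Pow T. y S) = y T + (\<Sum>S\<in>Pow T - {T}. y S)"
    using sum.remove[OF fP, of T y] by simp
  moreover have "(\<Sum>S\<in>Pow T - {T}. x S) = (\<Sum>S\<in>Pow T - {T}. y S)" using eq by (rule sum.cong[OF refl])
  ultimately show ?case using h[OF less.prems] by simp
qed

lemma foldr_fix: "\<forall>l\<in>set w. U l m = m \<Longrightarrow> foldr U w m = m"
  by (induction w) auto

context ctx begin

lemma count_eq:
  assumes n1: "1 \<le> n" and S0: "S0 \<subseteq> {1..<n}"
  shows "card {m \<in> maximal_chains P. descents n U m \<subseteq> S0} = card {D. is_chain P D \<and> rank P ` D = S0}"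
proof -
  define U0 where "U0 = {1..<n}"
  define J where "J = U0 - S0"
  have fU0: "finite U0" using U0_def by simp
  have Jsub: "J \<subseteq> {1..<n}" unfolding J_def U0_def by blast
  obtain w where w: "set w = J" "\<forall>m\<in>maximal_chains P. \<forall>i\<in>J. U i (foldr U w m) = foldr U w m"
    using zero_word[OF Jsub] by blast
  define A where "A = {m \<in> maximal_chains P. descents n U m \<subseteq> S0}"
  have Aeq: "{m \<in> maximal_chains P. foldr U w m = m} = A"
  proof (rule set_eqI, rule iffI)
    fix m assume m: "m \<in> {m \<in> maximal_chains P. foldr U w m = m}"
    have mM: "m \<in> maximal_chains P" and fx: "foldr U w m = m" using m by simp_all
    have "U i m = m" if i: "i \<in> J" for i
    proof -
      have "U i (foldr U w m) = foldr U w m" using w(2) mM i by blast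
      thus ?thesis using fx by simp
    qed
    hence "\<forall>i\<in>J. U i m = m" by blast
    hence "descents n U m \<subseteq> S0" unfolding descents_def J_def U0_def by auto
    thus "m \<in> A" using m A_def by simp
  next
    fix m assume m: "m \<in> A"
    hence "\<forall>i\<in>J. U i m = m" unfolding A_def descents_def J_def U0_def by auto
    hence "foldr U w m = m" using w(1) by (intro foldr_fix) auto
    thus "m \<in> {m \<in> maximal_chains P. foldr U w m = m}" using m A_def by simp
  qed
  obtain c d where
    hc: "\<forall>w. set w \<subseteq> {1..<n} \<longrightarrow> chi_P P U w = (\<Sum>S\<in>Pow {1..<n}. c S * chi_S S w)" and
    hd: "\<forall>a\<in>monomials. F_coeff P zh oh a = (\<Sum>S\<in>Pow {1..<n}. d S * L_coeff S n a)" and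
    hcd: "\<forall>a\<in>monomials. (\<Sum>S\<in>Pow {1..<n}. d S * L_coeff ({1..<n} - S) n a)
                        = (\<Sum>S\<in>Pow {1..<n}. c S * L_coeff S n a)"
    using G6[unfolded omegaF_eq_ch_def] by blast
  define s :: int where "s = (-1) ^ length w"
  have s0: "s \<noteq> 0" using s_def by simp
  have "chi_P P U w = s * int (card A)" unfolding chi_P_def s_def Aeq ..
  also have "chi_P P U w = (\<Sum>S\<in>Pow U0. c S * chi_S S w)"
  proof -
    have "set w \<subseteq> {1..<n}" using w(1) J_def U0_def by auto
    thus ?thesis unfolding U0_def using hc by blast
  qed
  also have "\<dots> = (\<Sum>S\<in>Pow U0. s * (if J \<subseteq> S then c S else 0))"
    by (rule sum.cong) (auto simp: chi_S_eval w(1) s_def)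
  also have "\<dots> = s * (\<Sum>S\<in>Pow U0. if J \<subseteq> S then c S else 0)" by (simp add: sum_distrib_left)
  finally have cardA: "int (card A) = (\<Sum>S\<in>Pow U0. if J \<subseteq> S then c S else 0)" using s0 by simp
  have Lval: "L_coeff S n (aT r K) = (if S \<subseteq> T then 1 else 0)"
    if "strict_mono r" "r 0 = 0" "r K = n" "r ` {1..<K} = T" "S \<subseteq> U0" for r K T S
    using L_coeff_aT[OF that(1-3), of S] that U0_def by simp
  have ceq: "c R = d (U0 - R)" if R: "R \<subseteq> U0" for R
  proof (rule mobius[OF fU0 _ R])
    fix T assume T: "T \<subseteq> U0"
    have TT: "T \<subseteq> {1..<n}" using T unfolding U0_def .
    obtain r K where rK: "strict_mono (r::nat \<Rightarrow> nat)" "r 0 = 0" "r K = n" "1 \<le> (K::nat)" "r ` {1..<K} = T"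
      using exists_r[OF TT n1] by blast
    have "(\<Sum>S\<in>Pow U0. d S * L_coeff (U0 - S) n (aT r K)) = (\<Sum>S\<in>Pow U0. c S * L_coeff S n (aT r K))"
      unfolding U0_def by (rule hcd[rule_format, OF aT_monomial])
    also have "(\<Sum>S\<in>Pow U0. c S * L_coeff S n (aT r K)) = (\<Sum>S\<in>Pow U0. if S \<subseteq> T then c S else 0)"
      by (rule sum.cong) (use Lval[OF rK(1,2,3,5)] in auto)
    also have "\<dots> = (\<Sum>S\<in>Pow T. c S)" by (rule pow_if_sum[OF fU0 T])
    finally have e1: "(\<Sum>S\<in>Pow U0. d S * L_coeff (U0 - S) n (aT r K)) = (\<Sum>S\<in>Pow T. c S)" .
    have "(\<Sum>S\<in>Pow U0. d S * L_coeff (U0 - S) n (aT r K)) =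
          (\<Sum>S\<in>Pow U0. (\<lambda>R. if R \<subseteq> T then d (U0 - R) else 0) (U0 - S))"
      by (rule sum.cong) (use Lval[OF rK(1,2,3,5)] in \<open>auto simp: double_diff\<close>)
    also have "\<dots> = (\<Sum>R\<in>Pow U0. if R \<subseteq> T then d (U0 - R) else 0)" by (rule compl_sum[OF fU0])
    also have "\<dots> = (\<Sum>R\<in>Pow T. d (U0 - R))" by (rule pow_if_sum[OF fU0 T])
    finally show "(\<Sum>S\<in>Pow T. c S) = (\<Sum>S\<in>Pow T. d (U0 - S))" using e1 by simp
  qed
  have "int (card A) = (\<Sum>S\<in>Pow U0. if J \<subseteq> S then d (U0 - S) else 0)"
    unfolding cardA by (rule sum.cong) (auto simp: ceq)
  also have "\<dots> = (\<Sum>S\<in>Pow U0. (\<lambda>R. if J \<subseteq> U0 - R then d R else 0) (U0 - S))"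
    by (rule sum.cong) (auto simp: double_diff)
  also have "\<dots> = (\<Sum>R\<in>Pow U0. if J \<subseteq> U0 - R then d R else 0)" by (rule compl_sum[OF fU0])
  also have "\<dots> = (\<Sum>R\<in>Pow U0. if R \<subseteq> S0 then d R else 0)"
    by (rule sum.cong) (use S0 in \<open>auto simp: J_def U0_def\<close>)
  finally have cA: "int (card A) = (\<Sum>R\<in>Pow U0. if R \<subseteq> S0 then d R else 0)" .
  obtain r K where rK: "strict_mono (r::nat \<Rightarrow> nat)" "r 0 = 0" "r K = n" "1 \<le> (K::nat)" "r ` {1..<K} = S0"
    using exists_r[OF S0 n1] by blast
  have "int (card {D. is_chain P D \<and> rank P ` D = S0}) = F_coeff P zh oh (aT r K)"
    using F_coeff_aT[OF rK(1-4)] rK(5) by simp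
  also have "\<dots> = (\<Sum>S\<in>Pow U0. d S * L_coeff S n (aT r K))"
    unfolding U0_def by (rule hd[rule_format, OF aT_monomial])
  also have "\<dots> = (\<Sum>R\<in>Pow U0. if R \<subseteq> S0 then d R else 0)"
    by (rule sum.cong) (use Lval[OF rK(1,2,3,5)] in auto)
  finally show ?thesis using cA A_def by simp
qed

end

context ctx begin

lemma main_ctx:
  assumes S: "S \<subseteq> {1..<n}" and C: "is_chain P C" and CS: "rank P ` (C - {zh, oh}) = S"
  shows "\<exists>!m. m \<in> maximal_chains P \<and> C \<subseteq> m \<and> descents n U m \<subseteq> S"
proof (cases "n = 0")
  case True
  have one: "m = {zh}" if m: "m \<in> maximal_chains P" for m
  proof -
    have "card m = 1" using mc_card[OF m] True by simp
    then obtain x where x: "m = {x}" by (rule card_1_singletonE)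
    thus ?thesis using mc_zh[OF m] by simp
  qed
  obtain m0 where m0: "m0 \<in> maximal_chains P" using mc_ex by blast
  have zo: "zh = oh" using one[OF m0] mc_oh[OF m0] by simp
  have PP: "P \<subseteq> {zh}"
  proof
    fix x assume x: "x \<in> P"
    have "zh \<le> x" using zh_le[OF x] .
    moreover have "x \<le> zh" using le_oh[OF x] zo by simp
    ultimately show "x \<in> {zh}" by simp
  qed
  have "C \<subseteq> {zh}" using chain_sub[OF C] PP by blast
  moreover have "descents n U {zh} \<subseteq> S" using True by (simp add: descents_def)
  ultimately have ok: "{zh} \<in> maximal_chains P \<and> C \<subseteq> {zh} \<and> descents n U {zh} \<subseteq> S"
    using one[OF m0] m0 by simp
  show ?thesis
  proof (rule ex1I[of _ "{zh}"])
    show "{zh} \<in> maximal_chains P \<and> C \<subseteq> {zh} \<and> descents n U {zh} \<subseteq> S" by (rule ok)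
    fix m assume "m \<in> maximal_chains P \<and> C \<subseteq> m \<and> descents n U m \<subseteq> S"
    thus "m = {zh}" using one by blast
  qed
next
  case False
  hence n1: "1 \<le> n" by simp
  define J where "J = {1..<n} - S"
  have Jsub: "J \<subseteq> {1..<n}" unfolding J_def by blast
  obtain w where w: "set w = J" "\<forall>m\<in>maximal_chains P. \<forall>i\<in>J. U i (foldr U w m) = foldr U w m"
    using zero_word[OF Jsub] by blast
  have wn: "set w \<subseteq> {1..<n}" using w(1) J_def by auto
  define A where "A = {m \<in> maximal_chains P. descents n U m \<subseteq> S}"
  define B where "B = {D. is_chain P D \<and> rank P ` D = S}"
  define phi where "phi m = {x \<in> m. rank P x \<in> S}" for m
  have exist: "\<exists>m\<in>A. D \<subseteq> m" if D: "D \<in> B" for D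
  proof -
    have Dc: "is_chain P D" and Dr: "rank P ` D = S" using D B_def by auto
    obtain m0 where m0: "m0 \<in> maximal_chains P" "D \<subseteq> m0" using extend_max[OF Dc] by blast
    define m where "m = foldr U w m0"
    have mM: "m \<in> maximal_chains P" using foldr_mc[OF wn m0(1)] m_def by simp
    have "D \<subseteq> m"
    proof
      fix x assume x: "x \<in> D"
      have "rank P x \<in> S" using x Dr by blast
      hence "rank P x \<notin> set w" using w(1) J_def by auto
      thus "x \<in> m" using foldr_keep[OF wn m0(1)] x m0(2) m_def by blast
    qed
    moreover have "descents n U m \<subseteq> S"
    proof
      fix i assume i: "i \<in> descents n U m"
      show "i \<in> S"
      proof (rule ccontr)
        assume "i \<notin> S"
        hence "i \<in> J" using i J_def by (auto simp: descents_def)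
        hence "U i m = m" using w(2) m0(1) m_def by blast
        thus False using i by (simp add: descents_def)
      qed
    qed
    ultimately show ?thesis using mM A_def by blast
  qed
  have phiD: "phi m = D" if m: "m \<in> maximal_chains P" and D: "D \<in> B" and Dm: "D \<subseteq> m" for m D
  proof
    show "D \<subseteq> phi m" using D Dm B_def phi_def by auto
    show "phi m \<subseteq> D"
    proof
      fix x assume x: "x \<in> phi m"
      hence xm: "x \<in> m" and xs: "rank P x \<in> S" using phi_def by auto
      have "rank P x \<in> rank P ` D" using xs D B_def by simp
      then obtain y where y0: "rank P x = rank P y" "y \<in> D" by (rule imageE)
      have y: "y \<in> D" "rank P y = rank P x" using y0 by simp_all
      have ym: "y \<in> m" using Dm y(1) by blast
      have "y = x" using inj_onD[OF rank_inj[OF mc_chain[OF m]] y(2) ym xm] .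
      thus "x \<in> D" using y by simp
    qed
  qed
  have img: "phi ` A = B"
  proof
    show "phi ` A \<subseteq> B"
    proof
      fix D assume "D \<in> phi ` A"
      then obtain m where m: "m \<in> A" "D = phi m" by blast
      have mM: "m \<in> maximal_chains P" using m A_def by simp
      have sub: "D \<subseteq> m" using m(2) phi_def by auto
      have ch: "is_chain P D" using mc_chain[OF mM] sub unfolding is_chain_def by blast
      have "rank P ` D = S"
      proof
        show "rank P ` D \<subseteq> S" using m(2) phi_def by auto
        show "S \<subseteq> rank P ` D"
        proof
          fix s assume s: "s \<in> S"
          hence "s \<in> rank P ` m" using mc_rank_image[OF mM] S by auto
          then obtain x where "x \<in> m" "rank P x = s" by blast
          thus "s \<in> rank P ` D" using s m(2) phi_def by auto
        qed
      qed
      thus "D \<in> B" using ch B_def by simp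
    qed
  next
    show "B \<subseteq> phi ` A"
    proof
      fix D assume D: "D \<in> B"
      obtain m where m: "m \<in> A" "D \<subseteq> m" using exist[OF D] by blast
      have "phi m = D" using phiD[OF _ D m(2)] m(1) A_def by simp
      thus "D \<in> phi ` A" using m(1) by force
    qed
  qed
  have finA: "finite A"
  proof -
    have "A \<subseteq> Pow P"
    proof
      fix m assume "m \<in> A"
      hence "m \<in> maximal_chains P" using A_def by simp
      thus "m \<in> Pow P" using chain_sub[OF mc_chain] by blast
    qed
    thus ?thesis using finite_Pow_iff fin finite_subset by metis
  qed
  have cAB: "card A = card B" using count_eq[OF n1 S] A_def B_def by simp
  have "card (phi ` A) = card A" using img cAB by simp
  hence inj: "inj_on phi A" by (rule eq_card_imp_inj_on[OF finA])
  define D0 where "D0 = C - {zh, oh}"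
  have "is_chain P D0" using C D0_def unfolding is_chain_def by blast
  hence D0B: "D0 \<in> B" using CS D0_def B_def by simp
  obtain m where m: "m \<in> A" "D0 \<subseteq> m" using exist[OF D0B] by blast
  have mM: "m \<in> maximal_chains P" using m A_def by simp
  have Cm: "C \<subseteq> m" using m(2) mc_zh[OF mM] mc_oh[OF mM] D0_def by auto
  show ?thesis
  proof (rule ex1I[of _ m])
    show "m \<in> maximal_chains P \<and> C \<subseteq> m \<and> descents n U m \<subseteq> S" using mM Cm m(1) A_def by simp
  next
    fix m' assume m': "m' \<in> maximal_chains P \<and> C \<subseteq> m' \<and> descents n U m' \<subseteq> S"
    hence m'A: "m' \<in> A" using A_def by simp
    have "D0 \<subseteq> m'" using m' D0_def by auto
    hence "phi m' = D0" using phiD[OF _ D0B] m' by simp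
    moreover have "phi m = D0" using phiD[OF mM D0B m(2)] .
    ultimately have "phi m' = phi m" by simp
    thus "m' = m" using inj_onD[OF inj _ m'A m(1)] by simp
  qed
qed

end

theorem mainTheorem14:
  fixes P :: "'a::order set" and zh oh :: 'a and n :: nat
    and U :: "nat \<Rightarrow> 'a set \<Rightarrow> 'a set" and S :: "nat set" and C :: "'a set"
  assumes "finite P"
    and "bounded_poset P zh oh"
    and "graded_of_rank P n"
    and "bowtie_free P"
    and "good_action P zh oh n U"
    and "S \<subseteq> {1..<n}"
    and "is_chain P C"
    and "rank P ` (C - {zh, oh}) = S"
  shows "\<exists>!m. m \<in> maximal_chains P \<and> C \<subseteq> m \<and> descents n U m \<subseteq> S"
proof -
  interpret ctx P zh oh n U using assms(1,2,3,5) by unfold_locales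
  show ?thesis by (rule main_ctx[OF assms(6,7,8)])
qed

end
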